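(* Let $a\ge b\ge1$ be integers with either $b\ge2$, or $b=1$ and $a\ge5$, and $A=\begin{pmatrix}2&-a\\-b&2\end{pmatrix}$. Let $j,k\in\mathbb Z_+$ with $j\not\equiv k \pmod 2$. Then (1) $\langle\beta_1^j,(\beta_2^k)^\vee\rangle=\langle\beta_2^k,(\beta_1^j)^\vee\rangle$; (2) if $\ell,i\in\mathbb Z_+$ with $j+k=\ell+i$, then $\langle\beta_1^j,(\beta_2^k)^\vee\rangle=\langle\beta_1^\ell,(\beta_2^i)^\vee\rangle$.
   Context: Let $\mathfrak g(A)$ have simple roots $\alpha_1,\alpha_2$, invariant form $(\alpha_1,\alpha_1)=2$, $(\alpha_2,\alpha_2)=2a/b$, $(\alpha_1,\alpha_2)=-a$, and for a real root $\beta$ let $\langle\lambda,\beta^\vee\rangle=2(\lambda,\beta)/(\beta,\beta)$. $\mathbb Z_+=\{0,1,2,\dots\}$. Define $c_0=d_0=0$, $c_1=d_1=1$, $c_{k+2}+c_k=a d_{k+1}$, $d_{k+2}+d_k=b c_{k+1}$, and $\beta_1^j=c_j\alpha_1+d_{j+1}\alpha_2$, $\beta_2^j=c_{j+1}\alpha_1+d_j\alpha_2$. *)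

theory Defs
  imports Main HOL.Real
begin

fun cd :: "int \<Rightarrow> int \<Rightarrow> nat \<Rightarrow> int \<times> int" where
  "cd a b 0 = (0, 0)"
| "cd a b (Suc 0) = (1, 1)"
| "cd a b (Suc (Suc k)) =
     (a * snd (cd a b (Suc k)) - fst (cd a b k),
      b * fst (cd a b (Suc k)) - snd (cd a b k))"

definition cseq :: "int \<Rightarrow> int \<Rightarrow> nat \<Rightarrow> int" where
  "cseq a b k = fst (cd a b k)"

definition dseq :: "int \<Rightarrow> int \<Rightarrow> nat \<Rightarrow> int" where
  "dseq a b k = snd (cd a b k)"

text \<open>Elements of the root lattice x alpha_1 + y alpha_2 are represented by coefficient pairs (x, y).\<close>
definition beta1 :: "int \<Rightarrow> int \<Rightarrow> nat \<Rightarrow> int \<times> int" where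
  "beta1 a b j = (cseq a b j, dseq a b (Suc j))"

definition beta2 :: "int \<Rightarrow> int \<Rightarrow> nat \<Rightarrow> int \<times> int" where
  "beta2 a b j = (cseq a b (Suc j), dseq a b j)"

text \<open>Invariant form: (a1,a1)=2, (a2,a2)=2a/b, (a1,a2)=-a.\<close>
definition invform :: "int \<Rightarrow> int \<Rightarrow> int \<times> int \<Rightarrow> int \<times> int \<Rightarrow> real" where
  "invform a b u v =
     2 * of_int (fst u) * of_int (fst v)
     - of_int a * (of_int (fst u) * of_int (snd v) + of_int (snd u) * of_int (fst v))
     + (2 * of_int a / of_int b) * of_int (snd u) * of_int (snd v)"

text \<open>pairing lambda beta = <lambda, beta^vee> = 2 (lambda, beta) / (beta, beta).\<close>
definition pairing :: "int \<Rightarrow> int \<Rightarrow> int \<times> int \<Rightarrow> int \<times> int \<Rightarrow> real" where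
  "pairing a b lam bet = 2 * invform a b lam bet / invform a b bet bet"

end

theory Submission
  imports Defs
begin

lemma cs0[simp]: "cseq a b 0 = 0" and cs1[simp]: "cseq a b (Suc 0) = 1"
  and ds0[simp]: "dseq a b 0 = 0" and ds1[simp]: "dseq a b (Suc 0) = 1"
  by (simp_all add: cseq_def dseq_def)

lemma csS[simp]: "cseq a b (Suc (Suc n)) = a * dseq a b (Suc n) - cseq a b n"
  and dsS[simp]: "dseq a b (Suc (Suc n)) = b * cseq a b (Suc n) - dseq a b n"
  by (simp_all add: cseq_def dseq_def)

definition Bi :: "int \<Rightarrow> int \<Rightarrow> int \<times> int \<Rightarrow> int \<times> int \<Rightarrow> int" where
  "Bi a b u v = 2*b*fst u*fst v - a*b*(fst u*snd v + snd u*fst v) + 2*a*snd u*snd v"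

lemma invform_Bi: "b \<noteq> 0 \<Longrightarrow> invform a b u v = of_int (Bi a b u v) / of_int b"
  unfolding invform_def Bi_def by (simp add: field_simps)

lemma pairing_Bi: "b \<noteq> 0 \<Longrightarrow> pairing a b u v = 2 * of_int (Bi a b u v) / of_int (Bi a b v v)"
  unfolding pairing_def invform_Bi by (simp add: field_simps)

lemma norm1_step: "Bi a b (beta1 a b (Suc (Suc j))) (beta1 a b (Suc (Suc j))) = Bi a b (beta1 a b j) (beta1 a b j)"
  unfolding beta1_def Bi_def by (simp add: algebra_simps power2_eq_square)

lemma norm2_step: "Bi a b (beta2 a b (Suc (Suc j))) (beta2 a b (Suc (Suc j))) = Bi a b (beta2 a b j) (beta2 a b j)"
  unfolding beta2_def Bi_def by (simp add: algebra_simps)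

lemma shift_step: "Bi a b (beta1 a b (Suc (Suc j))) (beta2 a b k) = Bi a b (beta1 a b j) (beta2 a b (Suc (Suc k)))"
  unfolding beta1_def beta2_def Bi_def by (simp add: algebra_simps)

lemma norms:
  "Bi a b (beta1 a b (2*m)) (beta1 a b (2*m)) = 2*a \<and>
   Bi a b (beta1 a b (Suc (2*m))) (beta1 a b (Suc (2*m))) = 2*b \<and>
   Bi a b (beta2 a b (2*m)) (beta2 a b (2*m)) = 2*b \<and>
   Bi a b (beta2 a b (Suc (2*m))) (beta2 a b (Suc (2*m))) = 2*a"
proof (induction m)
  case 0
  then show ?case by (simp add: Bi_def beta1_def beta2_def numeral_2_eq_2 algebra_simps)
next
  case (Suc m)
  have e1: "2 * Suc m = Suc (Suc (2*m))" by simp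
  show ?case unfolding e1 norm1_step norm2_step using Suc by simp
qed

lemma norm1: "Bi a b (beta1 a b j) (beta1 a b j) = (if even j then 2*a else 2*b)"
  using norms[of a b "j div 2"] by (cases "even j") (auto elim!: evenE oddE)

lemma norm2: "Bi a b (beta2 a b k) (beta2 a b k) = (if even k then 2*b else 2*a)"
  using norms[of a b "k div 2"] by (cases "even k") (auto elim!: evenE oddE)

lemma shift: "Bi a b (beta1 a b (p + 2*m)) (beta2 a b k) = Bi a b (beta1 a b p) (beta2 a b (k + 2*m))"
proof (induction m arbitrary: k)
  case 0
  then show ?case by simp
next
  case (Suc m)
  have "p + 2 * Suc m = Suc (Suc (p + 2*m))" by simp
  then have "Bi a b (beta1 a b (p + 2 * Suc m)) (beta2 a b k)
     = Bi a b (beta1 a b (p + 2*m)) (beta2 a b (Suc (Suc k)))" using shift_step by simp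
  also have "\<dots> = Bi a b (beta1 a b p) (beta2 a b (Suc (Suc k) + 2*m))" by (rule Suc.IH)
  finally show ?case by simp
qed

lemma c4: "cseq a b (Suc (Suc (Suc (Suc n)))) = (a*b-2) * cseq a b (Suc (Suc n)) - cseq a b n"
  by (simp add: algebra_simps)
lemma d4: "dseq a b (Suc (Suc (Suc (Suc n)))) = (a*b-2) * dseq a b (Suc (Suc n)) - dseq a b n"
  by (simp add: algebra_simps)

definition EE :: "int \<Rightarrow> int \<Rightarrow> nat \<Rightarrow> int" where
  "EE a b m = b * (2*a * dseq a b (Suc (2*m)) - a*b * cseq a b (Suc (Suc (2*m))))
     - a * b * ((2 - a*b) * cseq a b (Suc (2*m)) + a * dseq a b (2*m))"

lemma EE_rec: "EE a b (Suc (Suc m)) = (a*b-2) * EE a b (Suc m) - EE a b m"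
proof -
  have A: "2 * Suc (Suc m) = Suc (Suc (Suc (Suc (2*m))))"
    "2 * Suc m = Suc (Suc (2*m))" by simp_all
  show ?thesis unfolding EE_def A
    by (simp only: c4 d4) (simp only: ring_distribs algebra_simps)
qed

lemma EE_zero: "EE a b m = 0 \<and> EE a b (Suc m) = 0"
proof (induction m)
  case 0
  show ?case by (simp add: EE_def numeral_2_eq_2 numeral_3_eq_3 algebra_simps)
next
  case (Suc m)
  then show ?case using EE_rec[of a b m] by simp
qed

lemma key: "b * Bi a b (beta1 a b 0) (beta2 a b (Suc (2*m))) = a * Bi a b (beta1 a b 1) (beta2 a b (2*m))"
  using EE_zero[of a b m] unfolding EE_def Bi_def beta1_def beta2_def
  by (simp add: algebra_simps)

lemma pair_formula:
  assumes "b \<ge> 1" "a \<ge> 1" "odd (j + k)"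
  shows "pairing a b (beta1 a b j) (beta2 a b k) = of_int (Bi a b (beta1 a b 0) (beta2 a b (j+k))) / of_int a
       \<and> pairing a b (beta2 a b k) (beta1 a b j) = of_int (Bi a b (beta1 a b 0) (beta2 a b (j+k))) / of_int a"
proof (cases "even j")
  case True
  then obtain m where m: "j = 0 + 2*m" by (auto elim: evenE)
  have ko: "odd k" using True assms(3) by simp
  have Q: "Bi a b (beta1 a b j) (beta2 a b k) = Bi a b (beta1 a b 0) (beta2 a b (j+k))"
    using shift[of a b 0 m k] m by (simp add: add.commute)
  have N1: "Bi a b (beta1 a b j) (beta1 a b j) = 2*a" using norm1 True by simp
  have N2: "Bi a b (beta2 a b k) (beta2 a b k) = 2*a" using norm2 ko by simp
  have sym: "Bi a b (beta2 a b k) (beta1 a b j) = Bi a b (beta1 a b j) (beta2 a b k)"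
    unfolding Bi_def by (simp add: algebra_simps)
  have bnz: "b \<noteq> 0" using assms by simp
  show ?thesis using assms unfolding pairing_Bi[OF bnz] using Q N1 N2 sym by simp
next
  case False
  then obtain m where m: "j = 1 + 2*m" by (auto elim: oddE)
  have ke: "even k" using False assms(3) by simp
  then obtain r where r: "k = 2*r" by (auto elim: evenE)
  have Q: "Bi a b (beta1 a b j) (beta2 a b k) = Bi a b (beta1 a b 1) (beta2 a b (2*(m+r)))"
    using shift[of a b 1 m k] m r by (simp add: algebra_simps)
  have jk: "j + k = Suc (2*(m+r))" using m r by simp
  have K: "b * Bi a b (beta1 a b 0) (beta2 a b (j+k)) = a * Bi a b (beta1 a b 1) (beta2 a b (2*(m+r)))"
    unfolding jk by (rule key)
  have N1: "Bi a b (beta1 a b j) (beta1 a b j) = 2*b" using norm1 False by simp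
  have N2: "Bi a b (beta2 a b k) (beta2 a b k) = 2*b" using norm2 ke by simp
  have sym: "Bi a b (beta2 a b k) (beta1 a b j) = Bi a b (beta1 a b j) (beta2 a b k)"
    unfolding Bi_def by (simp add: algebra_simps)
  have K': "real_of_int (Bi a b (beta1 a b 1) (beta2 a b (2*(m+r)))) / of_int b
      = of_int (Bi a b (beta1 a b 0) (beta2 a b (j+k))) / of_int a"
  proof -
    have "real_of_int b * of_int (Bi a b (beta1 a b 0) (beta2 a b (j+k)))
        = of_int a * of_int (Bi a b (beta1 a b 1) (beta2 a b (2*(m+r))))"
      using arg_cong[OF K, of real_of_int] by simp
    then show ?thesis using assms by (simp add: field_simps)
  qed
  have bnz: "b \<noteq> 0" using assms by simp
  show ?thesis using assms unfolding pairing_Bi[OF bnz] using Q N1 N2 sym K' by simp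
qed

theorem lemma3p9:
  fixes a b :: int and j k :: nat
  assumes "a \<ge> b" and "b \<ge> 1"
    and "b \<ge> 2 \<or> (b = 1 \<and> a \<ge> 5)"
    and "odd (j + k)"
  shows "pairing a b (beta1 a b j) (beta2 a b k) = pairing a b (beta2 a b k) (beta1 a b j)
         \<and> (\<forall>l i :: nat. j + k = l + i \<longrightarrow>
           pairing a b (beta1 a b j) (beta2 a b k) = pairing a b (beta1 a b l) (beta2 a b i))"
proof -
  have a1: "a \<ge> 1" using assms by simp
  have P: "pairing a b (beta1 a b j) (beta2 a b k) = of_int (Bi a b (beta1 a b 0) (beta2 a b (j+k))) / of_int a
       \<and> pairing a b (beta2 a b k) (beta1 a b j) = of_int (Bi a b (beta1 a b 0) (beta2 a b (j+k))) / of_int a"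
    by (rule pair_formula[OF assms(2) a1 assms(4)])
  show ?thesis
  proof (intro conjI allI impI)
    show "pairing a b (beta1 a b j) (beta2 a b k) = pairing a b (beta2 a b k) (beta1 a b j)"
      using P by simp
  next
    fix l i :: nat assume h: "j + k = l + i"
    have "odd (l + i)" using h assms(4) by simp
    from pair_formula[OF assms(2) a1 this] P h
    show "pairing a b (beta1 a b j) (beta2 a b k) = pairing a b (beta1 a b l) (beta2 a b i)" by simp
  qed
qed

end
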